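(* Let $M_n=S_n\rtimes S_n$ be the semidirect product in which the second factor acts on the first (normal) factor by conjugation. Let $s_i$ denote the transposition $(i\ i{+}1)$ in the first factor and $t_i$ the transposition $(i\ i{+}1)$ in the second factor, $i=1,\dots,n-1$. Then $M_n$ admits the presentation with generators $s_i,t_i$ ($i=1,\dots,n-1$) and relations: $t_i^2=s_i^2=1$ ($1\le i\le n-1$); $s_is_j=s_js_i$ and $t_it_j=t_jt_i$ ($|i-j|\geq2$); $s_is_{i+1}s_i=s_{i+1}s_is_{i+1}$ and $t_it_{i+1}t_i=t_{i+1}t_it_{i+1}$ ($1\le i\le n-2$); $t_is_jt_i=s_j$ ($|i-j|\geq 2$); $t_is_it_i=s_i$ ($1\le i\le n-1$); $t_{i+1}s_it_{i+1}=s_{i+1}s_is_{i+1}$ ($1\le i\le n-2$); $t_{i-1}s_it_{i-1}=s_{i-1}s_is_{i-1}$ ($2\le i\le n-1$). *)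

theory Defs
  imports "HOL-Algebra.Sym_Groups"
begin

definition semidirect_prod ::
  "('n, 'x) monoid_scheme \<Rightarrow> ('h, 'y) monoid_scheme \<Rightarrow> ('h \<Rightarrow> 'n \<Rightarrow> 'n) \<Rightarrow> ('n \<times> 'h) monoid"
  where "semidirect_prod N H phi =
    \<lparr> carrier = carrier N \<times> carrier H,
      mult = (\<lambda>(a, h) (b, k). (a \<otimes>\<^bsub>N\<^esub> phi h b, h \<otimes>\<^bsub>H\<^esub> k)),
      one = (\<one>\<^bsub>N\<^esub>, \<one>\<^bsub>H\<^esub>) \<rparr>"

definition M :: "nat \<Rightarrow> ((nat \<Rightarrow> nat) \<times> (nat \<Rightarrow> nat)) monoid"
  where "M n = semidirect_prod (sym_group n) (sym_group n)
                 (\<lambda>h b. h \<circ> b \<circ> inv\<^bsub>sym_group n\<^esub> h)"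

text \<open>Words over an alphabet of generators: a letter (x, False) stands for x,
  a letter (x, True) for x^-1.\<close>

type_synonym 'g word = "('g \<times> bool) list"

definition words_over :: "'g set \<Rightarrow> 'g word set"
  where "words_over X = {w. set w \<subseteq> X \<times> UNIV}"

definition eval_word :: "('a, 'b) monoid_scheme \<Rightarrow> ('g \<Rightarrow> 'a) \<Rightarrow> 'g word \<Rightarrow> 'a"
  where "eval_word G f w =
    foldr (\<lambda>(x, b) acc. (if b then inv\<^bsub>G\<^esub> (f x) else f x) \<otimes>\<^bsub>G\<^esub> acc) w \<one>\<^bsub>G\<^esub>"

text \<open>The quotient of words by it is the presented group.\<close>

inductive word_equiv :: "('g word \<times> 'g word) set \<Rightarrow> 'g word \<Rightarrow> 'g word \<Rightarrow> bool"
  for R where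
  refl: "word_equiv R w w"
| sym: "word_equiv R u v \<Longrightarrow> word_equiv R v u"
| trans: "word_equiv R u v \<Longrightarrow> word_equiv R v w \<Longrightarrow> word_equiv R u w"
| cancel: "word_equiv R (u @ [(x, b), (x, \<not> b)] @ v) (u @ v)"
| rel: "(l, r) \<in> R \<Longrightarrow> word_equiv R (u @ l @ v) (u @ r @ v)"

definition is_presentation ::
  "('a, 'b) monoid_scheme \<Rightarrow> 'g set \<Rightarrow> ('g \<Rightarrow> 'a) \<Rightarrow> ('g word \<times> 'g word) set \<Rightarrow> bool"
  where "is_presentation G X f R \<longleftrightarrow>
    group G \<and> f ` X \<subseteq> carrier G \<and> R \<subseteq> words_over X \<times> words_over X \<and>
    carrier G = eval_word G f ` words_over X \<and>
    (\<forall>u \<in> words_over X. \<forall>v \<in> words_over X.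
        eval_word G f u = eval_word G f v \<longleftrightarrow> word_equiv R u v)"

text \<open>Generator (False, i) is s_i, generator (True, i) is t_i.\<close>

definition M_gens :: "nat \<Rightarrow> (bool \<times> nat) set"
  where "M_gens n = {(b, i). 1 \<le> i \<and> i \<le> n - 1}"

definition M_gen_elem :: "nat \<Rightarrow> bool \<times> nat \<Rightarrow> (nat \<Rightarrow> nat) \<times> (nat \<Rightarrow> nat)"
  where "M_gen_elem n g = (case g of
      (False, i) \<Rightarrow> (transpose i (Suc i), id)
    | (True, i) \<Rightarrow> (id, transpose i (Suc i)))"

definition s :: "nat \<Rightarrow> (bool \<times> nat) \<times> bool" where "s i = ((False, i), False)"
definition t :: "nat \<Rightarrow> (bool \<times> nat) \<times> bool" where "t i = ((True, i), False)"

definition M_rels :: "nat \<Rightarrow> ((bool \<times> nat) word \<times> (bool \<times> nat) word) set"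
  where "M_rels n =
       {([t i, t i], []) | i. 1 \<le> i \<and> i \<le> n - 1}
     \<union> {([s i, s i], []) | i. 1 \<le> i \<and> i \<le> n - 1}
     \<union> {([s i, s j], [s j, s i]) | i j. 1 \<le> i \<and> i \<le> n - 1 \<and> 1 \<le> j \<and> j \<le> n - 1
                                      \<and> (i + 2 \<le> j \<or> j + 2 \<le> i)}
     \<union> {([t i, t j], [t j, t i]) | i j. 1 \<le> i \<and> i \<le> n - 1 \<and> 1 \<le> j \<and> j \<le> n - 1
                                      \<and> (i + 2 \<le> j \<or> j + 2 \<le> i)}
     \<union> {([s i, s (i+1), s i], [s (i+1), s i, s (i+1)]) | i. 1 \<le> i \<and> i \<le> n - 2}
     \<union> {([t i, t (i+1), t i], [t (i+1), t i, t (i+1)]) | i. 1 \<le> i \<and> i \<le> n - 2}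
     \<union> {([t i, s j, t i], [s j]) | i j. 1 \<le> i \<and> i \<le> n - 1 \<and> 1 \<le> j \<and> j \<le> n - 1
                                      \<and> (i + 2 \<le> j \<or> j + 2 \<le> i)}
     \<union> {([t i, s i, t i], [s i]) | i. 1 \<le> i \<and> i \<le> n - 1}
     \<union> {([t (i+1), s i, t (i+1)], [s (i+1), s i, s (i+1)]) | i. 1 \<le> i \<and> i \<le> n - 2}
     \<union> {([t (i-1), s i, t (i-1)], [s (i-1), s i, s (i-1)]) | i. 2 \<le> i \<and> i \<le> n - 1}"

end

theory Submission
  imports Defs
begin

lemma we_ctx:
  assumes "word_equiv R u v"
  shows "word_equiv R (x @ u @ y) (x @ v @ y)"
  using assms
proof (induction)
  case (refl w) then show ?case by (rule word_equiv.refl)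
next
  case (sym u v) from sym.IH show ?case by (rule word_equiv.sym)
next
  case (trans u v w) then show ?case by (metis word_equiv.trans)
next
  case (cancel u a b v)
  show ?case using word_equiv.cancel[of R "x @ u" a b "v @ y"] by simp
next
  case (rel l r u v)
  show ?case using word_equiv.rel[OF rel, of "x @ u" "v @ y"] by simp
qed

lemma we_app:
  assumes "word_equiv R u u'" "word_equiv R v v'"
  shows "word_equiv R (u @ v) (u' @ v')"
proof -
  have "word_equiv R ([] @ u @ v) ([] @ u' @ v)" by (rule we_ctx[OF assms(1)])
  moreover have "word_equiv R (u' @ v @ []) (u' @ v' @ [])" by (rule we_ctx[OF assms(2)])
  ultimately show ?thesis by (simp add: word_equiv.trans)
qed

lemma we_rel:
  assumes "(l, r) \<in> R"
  shows "word_equiv R (x @ l @ y) (x @ r @ y)"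
  using word_equiv.rel[OF assms] .

lemma we_rel0:
  assumes "(l, r) \<in> R"
  shows "word_equiv R l r"
  using word_equiv.rel[OF assms, of "[]" "[]"] by simp

lemma we_trans3:
  assumes "word_equiv R a b" "word_equiv R b' c" "b = b'" "a' = a" "c = c'"
  shows "word_equiv R a' c'"
  using assms word_equiv.trans by metis

definition L :: "bool \<Rightarrow> nat \<Rightarrow> (bool \<times> nat) \<times> bool" where "L b i = ((b, i), False)"

lemma s_L: "s i = L False i" and t_L: "t i = L True i"
  by (simp_all add: s_def t_def L_def)

lemma rel_sq:
  assumes "1 \<le> i" "i \<le> n - 1"
  shows "([L b i, L b i], []) \<in> M_rels n"
  using assms by (cases b) (auto simp: M_rels_def s_L t_L)

lemma rel_comm:
  assumes "1 \<le> i" "i \<le> n - 1" "1 \<le> j" "j \<le> n - 1" "i + 2 \<le> j \<or> j + 2 \<le> i"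
  shows "([L b i, L b j], [L b j, L b i]) \<in> M_rels n"
  using assms by (cases b) (auto simp: M_rels_def s_L t_L)

lemma rel_braid:
  assumes "1 \<le> i" "i \<le> n - 2"
  shows "([L b i, L b (i+1), L b i], [L b (i+1), L b i, L b (i+1)]) \<in> M_rels n"
  using assms by (cases b) (auto simp: M_rels_def s_L t_L)

lemma rel_ts:
  assumes "1 \<le> i" "i \<le> n - 1" "1 \<le> j" "j \<le> n - 1"
  shows "\<exists>ws. set ws \<subseteq> {1..n-1} \<and> ([t i, s j, t i], map s ws) \<in> M_rels n"
proof -
  consider "i + 2 \<le> j \<or> j + 2 \<le> i" | "i = j" | "i = j + 1" | "j = i + 1" by linarith
  then show ?thesis
  proof cases
    case 1 then show ?thesis using assms
      by (intro exI[of _ "[j]"]) (auto simp: M_rels_def)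
  next
    case 2 then show ?thesis using assms
      by (intro exI[of _ "[j]"]) (auto simp: M_rels_def)
  next
    case 3 then show ?thesis using assms
      by (intro exI[of _ "[j+1, j, j+1]"]) (auto simp: M_rels_def)
  next
    case 4
    have "([t (j-1), s j, t (j-1)], [s (j-1), s j, s (j-1)]) \<in> M_rels n"
      unfolding M_rels_def apply (rule UnI2) apply (rule CollectI)
      apply (rule exI[of _ j]) using assms 4 by auto
    then show ?thesis using assms 4
      by (intro exI[of _ "[i, i+1, i]"]) auto
  qed
qed

section \<open>Coxeter normal forms\<close>

lemma comm_through:
  assumes "\<forall>x\<in>set u. 1 \<le> x \<and> x \<le> n - 1 \<and> (x + 2 \<le> j \<or> j + 2 \<le> x)" "1 \<le> j" "j \<le> n - 1"
  shows "word_equiv (M_rels n) (map (L b) (u @ [j])) (map (L b) (j # u))"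
  using assms(1)
proof (induction u)
  case Nil then show ?case by (simp add: word_equiv.refl)
next
  case (Cons a u)
  have 1: "word_equiv (M_rels n) ([L b a] @ map (L b) (u @ [j]) @ []) ([L b a] @ map (L b) (j # u) @ [])"
    by (rule we_ctx) (use Cons in auto)
  have 2: "word_equiv (M_rels n) ([] @ [L b a, L b j] @ map (L b) u) ([] @ [L b j, L b a] @ map (L b) u)"
    by (rule we_rel, rule rel_comm) (use Cons assms in auto)
  show ?case by (rule we_trans3[OF 1 2]) simp_all
qed

fun cyc :: "nat \<Rightarrow> nat \<Rightarrow> nat list" where
  "cyc m 0 = []"
| "cyc m (Suc k) = cyc m k @ [m - k]"

fun NF :: "nat \<Rightarrow> nat list set" where
  "NF 0 = {[]}"
| "NF (Suc m) = (\<lambda>(w, k). w @ cyc m k) ` (NF m \<times> {..m})"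

lemma cyc_set: "k \<le> m \<Longrightarrow> x \<in> set (cyc m k) \<Longrightarrow> m - k < x \<and> x \<le> m"
  by (induction k) auto

lemma NF_finite: "finite (NF m)"
  by (induction m) auto

lemma NF_card: "card (NF m) \<le> fact m"
proof (induction m)
  case 0 then show ?case by simp
next
  case (Suc m)
  have "card (NF (Suc m)) \<le> card (NF m \<times> {..m})"
    unfolding NF.simps by (rule card_image_le) (simp add: NF_finite)
  then have "card (NF (Suc m)) \<le> card (NF m) * Suc m" by (simp add: card_cartesian_product)
  moreover have "card (NF m) * Suc m \<le> fact m * Suc m" by (rule mult_le_mono1) (rule Suc.IH)
  moreover have "fact m * Suc m = (fact (Suc m)::nat)" by (simp add: fact_Suc)
  ultimately show ?case by linarith
qed

lemma cyc_A:
  assumes "k \<le> m" "m < n" "m - k + 2 \<le> j" "j \<le> m"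
  shows "word_equiv (M_rels n) (map (L b) (cyc m k @ [j])) (map (L b) ((j - 1) # cyc m k))"
  using assms
proof (induction k arbitrary: j)
  case 0 then show ?case by simp
next
  case (Suc k)
  show ?case
  proof (cases "m - k + 2 \<le> j")
    case True
    have 1: "word_equiv (M_rels n) (map (L b) (cyc m k) @ [L b (m - k), L b j] @ [])
                (map (L b) (cyc m k) @ [L b j, L b (m - k)] @ [])"
      by (rule we_rel, rule rel_comm) (use Suc.prems True in auto)
    have 2: "word_equiv (M_rels n) (map (L b) (cyc m k @ [j]) @ [L b (m - k)])
               (map (L b) ((j - 1) # cyc m k) @ [L b (m - k)])"
      using we_ctx[OF Suc.IH[of j], of "[]" "[L b (m - k)]"] Suc.prems True by simp
    show ?thesis by (rule we_trans3[OF 1 2]) simp_all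
  next
    case False
    then have j: "j = m - k + 1" using Suc.prems by simp
    then obtain k' where k': "k = Suc k'" using Suc.prems by (cases k) auto
    have mk: "m - k' = j" using j k' Suc.prems by simp
    have e: "cyc m (Suc k) = cyc m k' @ [j, j - 1]" using k' mk j Suc.prems by simp
    have 1: "word_equiv (M_rels n) (map (L b) (cyc m k') @ [L b (j-1), L b (j-1+1), L b (j-1)] @ [])
                (map (L b) (cyc m k') @ [L b (j-1+1), L b (j-1), L b (j-1+1)] @ [])"
      by (rule we_rel, rule rel_braid) (use Suc.prems j in auto)
    have 2: "word_equiv (M_rels n) ([] @ map (L b) (cyc m k' @ [j - 1]) @ [L b j, L b (j - 1)])
               ([] @ map (L b) ((j - 1) # cyc m k') @ [L b j, L b (j - 1)])"
      by (rule we_ctx, rule comm_through) (use Suc.prems j k' cyc_set[of k' m] in force)+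
    have 3: "j - 1 + 1 = j" using j by simp
    show ?thesis by (rule we_trans3[OF word_equiv.sym[OF 1] 2]) (use e k' mk 3 in simp_all)
  qed
qed

lemma NF_step:
  assumes "m \<le> n" "w \<in> NF m" "1 \<le> j" "j < m"
  shows "\<exists>w'\<in>NF m. word_equiv (M_rels n) (map (L b) (w @ [j])) (map (L b) w')"
  using assms
proof (induction m arbitrary: w j)
  case 0 then show ?case by simp
next
  case (Suc m)
  from Suc.prems obtain w0 k where w: "w = w0 @ cyc m k" "w0 \<in> NF m" "k \<le> m" by auto
  consider "j + k = m" | "j + k = m + 1" | "j + k \<ge> m + 2" | "j + k < m" by linarith
  then show ?case
  proof cases
    case 1
    have "w @ [j] = w0 @ cyc m (Suc k)" using w 1 by simp
    moreover have "w0 @ cyc m (Suc k) \<in> NF (Suc m)" using w 1 Suc.prems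
      by (auto intro!: image_eqI[of _ _ "(w0, Suc k)"])
    ultimately show ?thesis by (metis word_equiv.refl)
  next
    case 2
    then obtain k' where k': "k = Suc k'" using Suc.prems by (cases k) auto
    have "m - k' = j" using 2 k' by simp
    then have e: "w @ [j] = w0 @ cyc m k' @ [j, j]" using w k' by simp
    have "word_equiv (M_rels n) (map (L b) (w0 @ cyc m k') @ [L b j, L b j] @ [])
             (map (L b) (w0 @ cyc m k') @ [] @ [])"
      by (rule we_rel, rule rel_sq) (use Suc.prems in auto)
    moreover have "w0 @ cyc m k' \<in> NF (Suc m)" using w k'
      by (auto intro!: image_eqI[of _ _ "(w0, k')"])
    ultimately show ?thesis using e by (intro bexI[of _ "w0 @ cyc m k'"]) simp_all
  next
    case 3
    have 1: "word_equiv (M_rels n) (map (L b) w0 @ map (L b) (cyc m k @ [j]) @ [])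
               (map (L b) w0 @ map (L b) ((j - 1) # cyc m k) @ [])"
      by (rule we_ctx, rule cyc_A) (use Suc.prems w 3 in auto)
    have "\<exists>w'\<in>NF m. word_equiv (M_rels n) (map (L b) (w0 @ [j - 1])) (map (L b) w')"
      by (rule Suc.IH[OF _ w(2)]) (use Suc.prems 3 w(3) in auto)
    then obtain w0' where w0': "w0' \<in> NF m"
      "word_equiv (M_rels n) (map (L b) (w0 @ [j - 1])) (map (L b) w0')" by blast
    have 2: "word_equiv (M_rels n) ([] @ map (L b) (w0 @ [j - 1]) @ map (L b) (cyc m k))
               ([] @ map (L b) w0' @ map (L b) (cyc m k))"
      by (rule we_ctx, rule w0'(2))
    have "w0' @ cyc m k \<in> NF (Suc m)" using w w0' by (auto intro!: image_eqI[of _ _ "(w0', k)"])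
    moreover have "word_equiv (M_rels n) (map (L b) (w @ [j])) (map (L b) (w0' @ cyc m k))"
      by (rule we_trans3[OF 1 2]) (use w in simp_all)
    ultimately show ?thesis by blast
  next
    case 4
    have 1: "word_equiv (M_rels n) (map (L b) w0 @ map (L b) (cyc m k @ [j]) @ [])
               (map (L b) w0 @ map (L b) (j # cyc m k) @ [])"
      by (rule we_ctx, rule comm_through) (use Suc.prems w 4 cyc_set[of k m] in force)+
    have "\<exists>w'\<in>NF m. word_equiv (M_rels n) (map (L b) (w0 @ [j])) (map (L b) w')"
      by (rule Suc.IH[OF _ w(2)]) (use Suc.prems 4 w(3) in auto)
    then obtain w0' where w0': "w0' \<in> NF m"
      "word_equiv (M_rels n) (map (L b) (w0 @ [j])) (map (L b) w0')" by blast
    have 2: "word_equiv (M_rels n) ([] @ map (L b) (w0 @ [j]) @ map (L b) (cyc m k))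
               ([] @ map (L b) w0' @ map (L b) (cyc m k))"
      by (rule we_ctx, rule w0'(2))
    have "w0' @ cyc m k \<in> NF (Suc m)" using w w0' by (auto intro!: image_eqI[of _ _ "(w0', k)"])
    moreover have "word_equiv (M_rels n) (map (L b) (w @ [j])) (map (L b) (w0' @ cyc m k))"
      by (rule we_trans3[OF 1 2]) (use w in simp_all)
    ultimately show ?thesis by blast
  qed
qed

lemma NF_exists:
  assumes "set xs \<subseteq> {1..n-1}"
  shows "\<exists>w\<in>NF n. word_equiv (M_rels n) (map (L b) xs) (map (L b) w)"
  using assms
proof (induction xs rule: rev_induct)
  case Nil
  have "[] \<in> NF n"
  proof (induction n)
    case 0 then show ?case by simp
  next
    case (Suc n) then show ?case by (auto intro!: image_eqI[of _ _ "([], 0)"])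
  qed
  then show ?case by (intro bexI[of _ "[]"]) (simp_all add: word_equiv.refl)
next
  case (snoc x xs)
  then obtain w where w: "w \<in> NF n" "word_equiv (M_rels n) (map (L b) xs) (map (L b) w)" by auto
  have "x < n" "1 \<le> x" using snoc.prems by auto
  then have "\<exists>w'\<in>NF n. word_equiv (M_rels n) (map (L b) (w @ [x])) (map (L b) w')"
    using NF_step[OF _ w(1), where j=x and b=b and n=n] by simp
  then obtain w' where w': "w' \<in> NF n" "word_equiv (M_rels n) (map (L b) (w @ [x])) (map (L b) w')"
    by blast
  have "word_equiv (M_rels n) (map (L b) xs @ [L b x]) (map (L b) w @ [L b x])"
    using we_app[OF w(2) word_equiv.refl] .
  then show ?case using w' by (intro bexI[of _ w']) (auto intro: word_equiv.trans)
qed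


section \<open>Normal forms for mixed words\<close>

lemma letter_pos:
  assumes "x \<in> M_gens n"
  shows "word_equiv (M_rels n) [(x, True)] [(x, False)]"
proof -
  obtain c i where x: "x = (c, i)" "1 \<le> i" "i \<le> n - 1" using assms by (auto simp: M_gens_def)
  have r: "([(x, False), (x, False)], []) \<in> M_rels n"
    using rel_sq[OF x(2,3), of c] x(1) by (simp add: L_def)
  have 1: "word_equiv (M_rels n) ([(x, True)] @ [(x, False), (x, False)] @ []) ([(x, True)] @ [] @ [])"
    by (rule we_rel[OF r])
  have 2: "word_equiv (M_rels n) ([] @ [(x, True), (x, \<not> True)] @ [(x, False)]) ([] @ [(x, False)])"
    by (rule word_equiv.cancel)
  show ?thesis by (rule we_trans3[OF word_equiv.sym[OF 1] 2]) simp_all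
qed

lemma to_pos:
  assumes "set w \<subseteq> M_gens n \<times> UNIV"
  shows "word_equiv (M_rels n) w (map (\<lambda>(x, _). (x, False)) w)"
  using assms
proof (induction w)
  case Nil then show ?case by (simp add: word_equiv.refl)
next
  case (Cons a w)
  obtain x b where a: "a = (x, b)" by (cases a)
  have 1: "word_equiv (M_rels n) [(x, b)] [(x, False)]"
    using letter_pos[of x n] Cons.prems a by (cases b) (auto simp: word_equiv.refl)
  have "word_equiv (M_rels n) ([(x, b)] @ w) ([(x, False)] @ map (\<lambda>(x, _). (x, False)) w)"
    by (rule we_app[OF 1 Cons.IH]) (use Cons.prems in auto)
  then show ?case using a by simp
qed

lemma ts_step:
  assumes "1 \<le> i" "i \<le> n - 1" "1 \<le> j" "j \<le> n - 1"
  shows "\<exists>ws. set ws \<subseteq> {1..n-1} \<and> word_equiv (M_rels n) [t i, s j] (map s ws @ [t i])"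
proof -
  obtain ws where ws: "set ws \<subseteq> {1..n-1}" "([t i, s j, t i], map s ws) \<in> M_rels n"
    using rel_ts[OF assms] by blast
  have r: "([t i, t i], []) \<in> M_rels n" using rel_sq[OF assms(1,2), of True] by (simp add: t_L)
  have 1: "word_equiv (M_rels n) ([t i, s j] @ [t i, t i] @ []) ([t i, s j] @ [] @ [])"
    by (rule we_rel[OF r])
  have 2: "word_equiv (M_rels n) ([] @ [t i, s j, t i] @ [t i]) ([] @ map s ws @ [t i])"
    by (rule we_rel[OF ws(2)])
  have "word_equiv (M_rels n) [t i, s j] (map s ws @ [t i])"
    by (rule we_trans3[OF word_equiv.sym[OF 1] 2]) simp_all
  then show ?thesis using ws(1) by blast
qed

lemma t_pass:
  assumes "1 \<le> i" "i \<le> n - 1" "set xs \<subseteq> {1..n-1}"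
  shows "\<exists>xs'. set xs' \<subseteq> {1..n-1} \<and> word_equiv (M_rels n) (t i # map s xs) (map s xs' @ [t i])"
  using assms(3)
proof (induction xs)
  case Nil then show ?case by (intro exI[of _ "[]"]) (simp add: word_equiv.refl)
next
  case (Cons j xs)
  obtain ws where ws: "set ws \<subseteq> {1..n-1}" "word_equiv (M_rels n) [t i, s j] (map s ws @ [t i])"
    using ts_step[OF assms(1,2), of j] Cons.prems by auto
  obtain xs' where xs': "set xs' \<subseteq> {1..n-1}" "word_equiv (M_rels n) (t i # map s xs) (map s xs' @ [t i])"
    using Cons by auto
  have 1: "word_equiv (M_rels n) ([t i, s j] @ map s xs) ((map s ws @ [t i]) @ map s xs)"
    by (rule we_app[OF ws(2) word_equiv.refl])
  have 2: "word_equiv (M_rels n) (map s ws @ (t i # map s xs) @ []) (map s ws @ (map s xs' @ [t i]) @ [])"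
    by (rule we_ctx[OF xs'(2)])
  have "word_equiv (M_rels n) (t i # map s (j # xs)) (map s (ws @ xs') @ [t i])"
    by (rule we_trans3[OF 1 2]) simp_all
  then show ?case using ws xs' by (intro exI[of _ "ws @ xs'"]) auto
qed

lemma sort_st:
  assumes "set gs \<subseteq> M_gens n"
  shows "\<exists>xs ys. set xs \<subseteq> {1..n-1} \<and> set ys \<subseteq> {1..n-1} \<and>
           word_equiv (M_rels n) (map (\<lambda>x. (x, False)) gs) (map s xs @ map t ys)"
  using assms
proof (induction gs)
  case Nil then show ?case by (intro exI[of _ "[]"]) (simp add: word_equiv.refl)
next
  case (Cons g gs)
  obtain xs ys where h: "set xs \<subseteq> {1..n-1}" "set ys \<subseteq> {1..n-1}"
    "word_equiv (M_rels n) (map (\<lambda>x. (x, False)) gs) (map s xs @ map t ys)" using Cons by auto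
  obtain c i where g: "g = (c, i)" "1 \<le> i" "i \<le> n - 1" using Cons.prems by (auto simp: M_gens_def)
  have 0: "word_equiv (M_rels n) ([(g, False)] @ map (\<lambda>x. (x, False)) gs) ([(g, False)] @ map s xs @ map t ys)"
    by (rule we_app[OF word_equiv.refl h(3)])
  show ?case
  proof (cases c)
    case False
    then have "(g, False) = s i" using g by (simp add: s_def)
    then show ?thesis using 0 h g by (intro exI[of _ "i # xs"] exI[of _ ys]) auto
  next
    case True
    then have tg: "(g, False) = t i" using g by (simp add: t_def)
    obtain xs' where xs': "set xs' \<subseteq> {1..n-1}" "word_equiv (M_rels n) (t i # map s xs) (map s xs' @ [t i])"
      using t_pass[OF g(2,3) h(1)] by blast
    have 2: "word_equiv (M_rels n) ((t i # map s xs) @ map t ys) ((map s xs' @ [t i]) @ map t ys)"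
      by (rule we_app[OF xs'(2) word_equiv.refl])
    have "word_equiv (M_rels n) (map (\<lambda>x. (x, False)) (g # gs)) (map s xs' @ map t (i # ys))"
      by (rule we_trans3[OF 0 2]) (simp_all add: tg)
    then show ?thesis using xs' h g by (intro exI[of _ xs'] exI[of _ "i # ys"]) auto
  qed
qed

lemma NF_all:
  assumes "w \<in> words_over (M_gens n)"
  shows "\<exists>a\<in>NF n. \<exists>c\<in>NF n. word_equiv (M_rels n) w (map s a @ map t c)"
proof -
  have w: "set w \<subseteq> M_gens n \<times> UNIV" using assms by (simp add: words_over_def)
  have e1: "map (\<lambda>(x, _). (x, False)) w = map (\<lambda>x. (x, False)) (map fst w)" by (induction w) auto
  have "set (map fst w) \<subseteq> M_gens n" using w by auto
  then obtain xs ys where h: "set xs \<subseteq> {1..n-1}" "set ys \<subseteq> {1..n-1}"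
    "word_equiv (M_rels n) (map (\<lambda>x. (x, False)) (map fst w)) (map s xs @ map t ys)"
    using sort_st by blast
  obtain a where a: "a \<in> NF n" "word_equiv (M_rels n) (map (L False) xs) (map (L False) a)"
    using NF_exists[OF h(1)] by blast
  obtain c where c: "c \<in> NF n" "word_equiv (M_rels n) (map (L True) ys) (map (L True) c)"
    using NF_exists[OF h(2)] by blast
  have ms: "map s = map (L False)" "map t = map (L True)" by (auto simp: s_L t_L fun_eq_iff)
  have "word_equiv (M_rels n) (map s xs @ map t ys) (map s a @ map t c)"
    using we_app[OF a(2) c(2)] ms by simp
  then have "word_equiv (M_rels n) w (map s a @ map t c)"
    using to_pos[OF w] h(3) e1 by (metis word_equiv.trans)
  then show ?thesis using a c by blast
qed


section \<open>Concrete evaluation\<close>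

definition tau :: "nat \<Rightarrow> nat \<Rightarrow> nat" where "tau i = transpose i (Suc i)"

fun ev2 :: "(bool \<times> nat) word \<Rightarrow> (nat \<Rightarrow> nat) \<times> (nat \<Rightarrow> nat)" where
  "ev2 [] = (id, id)"
| "ev2 (((c, i), _) # w) = (tau i \<circ> fst (ev2 w), (if c then tau i else id) \<circ> snd (ev2 w))"

lemma ev2_append: "ev2 (u @ v) = (fst (ev2 u) \<circ> fst (ev2 v), snd (ev2 u) \<circ> snd (ev2 v))"
  by (induction u rule: ev2.induct) (auto simp: comp_assoc)

lemma tau_tau: "tau i \<circ> tau i = id"
  by (simp add: tau_def)

lemma tau_tau': "tau i \<circ> (tau i \<circ> f) = f"
  by (simp add: tau_tau flip: comp_assoc)

lemma tau_comm:
  assumes "i + 2 \<le> j \<or> j + 2 \<le> i"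
  shows "tau i \<circ> tau j = tau j \<circ> tau i"
  using assms by (auto simp: tau_def fun_eq_iff transpose_def)

lemma tau_braid:
  "tau i \<circ> (tau (Suc i) \<circ> tau i) = tau (Suc i) \<circ> (tau i \<circ> tau (Suc i))"
  by (auto simp: tau_def fun_eq_iff transpose_def)

lemma tau_conj:
  assumes "i + 2 \<le> j \<or> j + 2 \<le> i"
  shows "tau i \<circ> (tau j \<circ> tau i) = tau j"
proof -
  have "tau i \<circ> (tau j \<circ> tau i) = tau i \<circ> (tau i \<circ> tau j)" using tau_comm[OF assms] by simp
  then show ?thesis by (simp add: tau_tau')
qed

lemma ev2_rel:
  assumes "(l, r) \<in> M_rels n"
  shows "ev2 l = ev2 r"
  using assms unfolding M_rels_def
  by (auto simp: s_def t_def tau_tau tau_tau' tau_comm tau_braid tau_conj)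

lemma ev2_equiv:
  assumes "word_equiv (M_rels n) u v"
  shows "ev2 u = ev2 v"
  using assms
proof (induction)
  case (cancel u x b v)
  obtain c i where "x = (c, i)" by (cases x)
  then show ?case by (auto simp: ev2_append tau_tau' comp_assoc)
next
  case (rel l r u v)
  then show ?case using ev2_rel[OF rel] by (simp add: ev2_append)
qed auto

lemma ev2_s: "ev2 (map s xs) = (foldr (\<lambda>i f. tau i \<circ> f) xs id, id)"
  by (induction xs) (auto simp: s_def)

lemma ev2_t: "ev2 (map t xs) = (foldr (\<lambda>i f. tau i \<circ> f) xs id, foldr (\<lambda>i f. tau i \<circ> f) xs id)"
  by (induction xs) (auto simp: t_def)

lemma tau_permutes: "1 \<le> i \<Longrightarrow> i \<le> n - 1 \<Longrightarrow> tau i permutes {1..n}"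
  unfolding tau_def by (rule permutes_swap_id) auto

lemma ev2_permutes:
  assumes "set w \<subseteq> M_gens n \<times> UNIV"
  shows "fst (ev2 w) permutes {1..n} \<and> snd (ev2 w) permutes {1..n}"
  using assms
proof (induction w rule: ev2.induct)
  case 1 then show ?case using permutes_id[of "{1..n}"] by (simp add: id_def)
next
  case (2 c i b w)
  then have "1 \<le> i" "i \<le> n - 1" by (auto simp: M_gens_def)
  note i = this
  have P: "fst (ev2 w) permutes {1..n}" "snd (ev2 w) permutes {1..n}" using 2 by auto
  have T: "tau i permutes {1..n}" by (rule tau_permutes) (use i in auto)
  show ?case using permutes_compose[OF P(1) T] permutes_compose[OF P(2) T] P by (cases c) (simp_all add: o_def)
qed


abbreviation PS :: "nat \<Rightarrow> (nat \<Rightarrow> nat) set" where "PS n \<equiv> {p. p permutes {1..n}}"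

lemma M_carrier: "carrier (M n) = PS n \<times> PS n"
  by (simp add: M_def semidirect_prod_def sym_group_def)

lemma M_one: "one (M n) = (id, id)"
  by (simp add: M_def semidirect_prod_def sym_group_def)

lemma M_mult:
  assumes "h permutes {1..n}"
  shows "(a, h) \<otimes>\<^bsub>M n\<^esub> (b, k) = (a \<circ> (h \<circ> b \<circ> inv' h), h \<circ> k)"
proof -
  have "inv\<^bsub>sym_group n\<^esub> h = inv' h" using assms by (simp add: sym_group_carrier)
  then show ?thesis by (simp add: M_def semidirect_prod_def sym_group_mult)
qed

lemma M_group: "group (M n)"
proof (rule groupI)
  fix x y assume "x \<in> carrier (M n)" "y \<in> carrier (M n)"
  then obtain a h b k where xy: "x = (a, h)" "y = (b, k)" and p: "a permutes {1..n}" "h permutes {1..n}"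
    "b permutes {1..n}" "k permutes {1..n}" by (auto simp: M_carrier)
  show "x \<otimes>\<^bsub>M n\<^esub> y \<in> carrier (M n)"
    using p by (simp add: xy M_mult M_carrier permutes_compose permutes_inv)
next
  show "\<one>\<^bsub>M n\<^esub> \<in> carrier (M n)" by (simp add: M_one M_carrier permutes_id)
next
  fix x y z assume "x \<in> carrier (M n)" "y \<in> carrier (M n)" "z \<in> carrier (M n)"
  then obtain a h b k c l where xyz: "x = (a, h)" "y = (b, k)" "z = (c, l)" and p: "a permutes {1..n}" "h permutes {1..n}"
    "b permutes {1..n}" "k permutes {1..n}" "c permutes {1..n}" "l permutes {1..n}" by (auto simp: M_carrier)
  have hk: "inv' (h \<circ> k) = inv' k \<circ> inv' h" using p by (simp add: o_inv_distrib permutes_bij)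
  show "x \<otimes>\<^bsub>M n\<^esub> y \<otimes>\<^bsub>M n\<^esub> z = x \<otimes>\<^bsub>M n\<^esub> (y \<otimes>\<^bsub>M n\<^esub> z)"
    using p by (simp add: xyz M_mult permutes_compose hk fun_eq_iff permutes_inverses)
next
  fix x assume "x \<in> carrier (M n)"
  then obtain a h where x: "x = (a, h)" and p: "a permutes {1..n}" "h permutes {1..n}"
    by (auto simp: M_carrier)
  show "\<one>\<^bsub>M n\<^esub> \<otimes>\<^bsub>M n\<^esub> x = x" by (simp add: x M_one M_mult)
next
  fix x assume "x \<in> carrier (M n)"
  then obtain a h where x: "x = (a, h)" and p: "a permutes {1..n}" "h permutes {1..n}"
    by (auto simp: M_carrier)
  let ?y = "(inv' h \<circ> inv' a \<circ> h, inv' h)"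
  have y: "?y \<in> carrier (M n)" using p by (simp add: M_carrier permutes_compose permutes_inv)
  have "?y \<otimes>\<^bsub>M n\<^esub> x = \<one>\<^bsub>M n\<^esub>"
    using p by (simp add: x M_one M_mult permutes_inv permutes_inv_inv fun_eq_iff permutes_inverses)
  then show "\<exists>y\<in>carrier (M n). y \<otimes>\<^bsub>M n\<^esub> x = \<one>\<^bsub>M n\<^esub>" using y by blast
qed

lemma gen_carrier: "g \<in> M_gens n \<Longrightarrow> M_gen_elem n g \<in> carrier (M n)"
  by (auto simp: M_gens_def M_gen_elem_def M_carrier intro!: permutes_swap_id split: bool.splits)

lemma gen_inv: "g \<in> M_gens n \<Longrightarrow> inv\<^bsub>M n\<^esub> (M_gen_elem n g) = M_gen_elem n g"
proof -
  assume g: "g \<in> M_gens n"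
  obtain c i where ci: "g = (c, i)" "1 \<le> i" "i \<le> n - 1" using g by (auto simp: M_gens_def)
  have "M_gen_elem n g \<otimes>\<^bsub>M n\<^esub> M_gen_elem n g = \<one>\<^bsub>M n\<^esub>"
    using ci by (cases c) (auto simp: M_gen_elem_def M_mult M_one permutes_swap_id)
  then show ?thesis using group.inv_equality[OF M_group _ gen_carrier[OF g] gen_carrier[OF g]] by blast
qed

lemma eval_Nil: "eval_word G f [] = \<one>\<^bsub>G\<^esub>"
  by (simp add: eval_word_def)

lemma eval_Cons: "eval_word G f ((x, b) # w) = (if b then inv\<^bsub>G\<^esub> (f x) else f x) \<otimes>\<^bsub>G\<^esub> eval_word G f w"
  by (simp add: eval_word_def)

lemma eval_ev2:
  assumes "set w \<subseteq> M_gens n \<times> UNIV"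
  shows "eval_word (M n) (M_gen_elem n) w = (fst (ev2 w) \<circ> inv' (snd (ev2 w)), snd (ev2 w))"
  using assms
proof (induction w rule: ev2.induct)
  case 1 then show ?case by (simp add: eval_Nil M_one id_def)
next
  case (2 c i b w)
  have g: "(c, i) \<in> M_gens n" using 2 by auto
  then have i: "1 \<le> i" "i \<le> n - 1" by (auto simp: M_gens_def)
  have T: "tau i permutes {1..n}" by (rule tau_permutes) (use i in auto)
  have Q: "snd (ev2 w) permutes {1..n}" using ev2_permutes[of w n] 2 by auto
  have IH: "eval_word (M n) (M_gen_elem n) w = (fst (ev2 w) \<circ> inv' (snd (ev2 w)), snd (ev2 w))"
    using 2 by auto
  have e: "eval_word (M n) (M_gen_elem n) (((c, i), b) # w) = M_gen_elem n (c, i) \<otimes>\<^bsub>M n\<^esub> eval_word (M n) (M_gen_elem n) w"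
    using gen_inv[OF g] by (simp add: eval_Cons)
  show ?case
  proof (cases c)
    case False
    have ge: "M_gen_elem n (c, i) = (tau i, id)" using False by (simp add: M_gen_elem_def tau_def)
    show ?thesis by (simp only: e IH ge) (simp add: M_mult False o_def)
  next
    case True
    have hinv: "inv' (tau i \<circ> snd (ev2 w)) = inv' (snd (ev2 w)) \<circ> tau i"
      using T Q by (simp add: o_inv_distrib permutes_bij tau_def)
    have ge: "M_gen_elem n (c, i) = (id, tau i)" using True by (simp add: M_gen_elem_def tau_def)
    have ti: "inv' (tau i) = tau i" by (simp add: tau_def)
    have r: "ev2 (((c, i), b) # w) = (tau i \<circ> fst (ev2 w), tau i \<circ> snd (ev2 w))" using True by simp
    have m: "(id, tau i) \<otimes>\<^bsub>M n\<^esub> (fst (ev2 w) \<circ> inv' (snd (ev2 w)), snd (ev2 w))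
       = (id \<circ> (tau i \<circ> (fst (ev2 w) \<circ> inv' (snd (ev2 w))) \<circ> inv' (tau i)), tau i \<circ> snd (ev2 w))"
      by (rule M_mult[OF T])
    show ?thesis unfolding e IH ge r m snd_conv fst_conv hinv ti by (simp add: fun_eq_iff)
  qed
qed


section \<open>Generation of S_n by adjacent transpositions\<close>

definition prodT :: "nat list \<Rightarrow> nat \<Rightarrow> nat" where "prodT xs = foldr (\<lambda>i f. tau i \<circ> f) xs id"

lemma prodT_append: "prodT (xs @ ys) = prodT xs \<circ> prodT ys"
  by (induction xs) (auto simp: prodT_def comp_assoc)

lemma prodT_Nil: "prodT [] = id" by (simp add: prodT_def)
lemma prodT_Cons: "prodT (i # xs) = tau i \<circ> prodT xs" by (simp add: prodT_def)
lemma prodT_single: "prodT [i] = tau i" by (simp add: prodT_def)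

lemma transp_step:
  assumes "a < b"
  shows "transpose a (Suc b) = tau b \<circ> transpose a b \<circ> tau b"
proof (rule ext)
  fix x
  show "transpose a (Suc b) x = (tau b \<circ> transpose a b \<circ> tau b) x"
    using assms unfolding tau_def transpose_def by auto
qed

lemma transp_gen_aux:
  assumes "1 \<le> a" "a + Suc d \<le> n"
  shows "\<exists>xs. set xs \<subseteq> {1..n-1} \<and> prodT xs = transpose a (a + Suc d)"
  using assms
proof (induction d)
  case 0 then show ?case by (intro exI[of _ "[a]"]) (auto simp: prodT_single tau_def)
next
  case (Suc d)
  then obtain xs where xs: "set xs \<subseteq> {1..n-1}" "prodT xs = transpose a (a + Suc d)" by auto
  have "prodT ([a + Suc d] @ xs @ [a + Suc d]) = transpose a (a + Suc (Suc d))"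
    using transp_step[of a "a + Suc d"] xs by (simp add: prodT_append prodT_single prodT_Cons prodT_Nil comp_assoc)
  then show ?case using xs Suc.prems by (intro exI[of _ "[a + Suc d] @ xs @ [a + Suc d]"]) auto
qed

lemma transp_gen:
  assumes "a \<in> {1..n}" "b \<in> {1..n}" "a \<noteq> b"
  shows "\<exists>xs. set xs \<subseteq> {1..n-1} \<and> prodT xs = transpose a b"
proof (cases "a < b")
  case True
  then obtain d where "b = Suc (a + d)" using less_imp_Suc_add by blast
  then have d: "b = a + Suc d" by simp
  have h: "1 \<le> a" "a + Suc d \<le> n" using assms d by auto
  show ?thesis using transp_gen_aux[OF h] unfolding d .
next
  case False
  then have "b < a" using assms by auto
  then obtain d where "a = Suc (b + d)" using less_imp_Suc_add by blast
  then have d: "a = b + Suc d" by simp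
  have h: "1 \<le> b" "b + Suc d \<le> n" using assms d by auto
  obtain xs where xs: "set xs \<subseteq> {1..n-1}" "prodT xs = transpose b (b + Suc d)"
    using transp_gen_aux[OF h] by blast
  have "prodT xs = transpose a b" using xs(2) unfolding d[symmetric] by (simp only: transpose_commute[of b a])
  then show ?thesis using xs(1) by blast
qed

lemma swap_gen:
  assumes "swapidseq_ext S k p" "S \<subseteq> {1..n}"
  shows "\<exists>xs. set xs \<subseteq> {1..n-1} \<and> prodT xs = p"
  using assms
proof (induction)
  case empty then show ?case by (intro exI[of _ "[]"]) (simp add: prodT_Nil)
next
  case (single S k p a) then show ?case by auto
next
  case (comp S k p a b)
  then obtain xs where xs: "set xs \<subseteq> {1..n-1}" "prodT xs = p" by auto
  obtain ys where ys: "set ys \<subseteq> {1..n-1}" "prodT ys = transpose a b"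
    using transp_gen[of a n b] comp by auto
  show ?case using xs ys by (intro exI[of _ "ys @ xs"]) (auto simp: prodT_append)
qed

lemma perm_gen:
  assumes "p permutes {1..n}"
  shows "\<exists>xs. set xs \<subseteq> {1..n-1} \<and> prodT xs = p"
proof -
  obtain k where "swapidseq_ext {1..n} k p" using swapidseq_ext_of_permutation[OF assms] by auto
  then show ?thesis using swap_gen by blast
qed

lemma ev2_st: "ev2 (map s xs @ map t ys) = (prodT xs \<circ> prodT ys, prodT ys)"
  by (simp add: ev2_append ev2_s ev2_t prodT_def)

lemma st_words:
  assumes "set xs \<subseteq> {1..n-1}" "set ys \<subseteq> {1..n-1}"
  shows "map s xs @ map t ys \<in> words_over (M_gens n)"
  using assms by (auto simp: words_over_def M_gens_def s_def t_def)

theorem proposition7p2: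
  fixes n :: nat
  shows "is_presentation (M n) (M_gens n) (M_gen_elem n) (M_rels n)"
proof -
  have W: "w \<in> words_over (M_gens n) \<Longrightarrow> set w \<subseteq> M_gens n \<times> UNIV" for w
    by (simp add: words_over_def)
  have evalP: "eval_word (M n) (M_gen_elem n) u = eval_word (M n) (M_gen_elem n) v \<longleftrightarrow> ev2 u = ev2 v"
    if "u \<in> words_over (M_gens n)" "v \<in> words_over (M_gens n)" for u v
  proof -
    have pu: "snd (ev2 u) permutes {1..n}" using ev2_permutes[OF W[OF that(1)]] by auto
    have pv: "snd (ev2 v) permutes {1..n}" using ev2_permutes[OF W[OF that(2)]] by auto
    have k: "f \<circ> inv' q \<circ> q = f" if "q permutes {1..n}" for f q
      using that by (simp add: fun_eq_iff permutes_inverses)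
    show ?thesis
      unfolding eval_ev2[OF W[OF that(1)]] eval_ev2[OF W[OF that(2)]]
      by (metis k pu pv prod.collapse prod.inject)
  qed
  have surj: "\<exists>w. set w \<subseteq> M_gens n \<times> UNIV \<and> w \<in> words_over (M_gens n) \<and> ev2 w = (p, q)"
    if pq: "p permutes {1..n}" "q permutes {1..n}" for p q
  proof -
    obtain xs where xs: "set xs \<subseteq> {1..n-1}" "prodT xs = p \<circ> inv' q"
      using perm_gen[OF permutes_compose[OF permutes_inv[OF pq(2)] pq(1)]] by blast
    obtain ys where ys: "set ys \<subseteq> {1..n-1}" "prodT ys = q"
      using perm_gen[OF pq(2)] by blast
    have "ev2 (map s xs @ map t ys) = (p, q)"
      using pq by (simp add: ev2_st xs ys fun_eq_iff permutes_inverses)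
    then show ?thesis using st_words[OF xs(1) ys(1)] W by blast
  qed
  have carr: "carrier (M n) = eval_word (M n) (M_gen_elem n) ` words_over (M_gens n)"
  proof
    show "eval_word (M n) (M_gen_elem n) ` words_over (M_gens n) \<subseteq> carrier (M n)"
    proof
      fix x assume "x \<in> eval_word (M n) (M_gen_elem n) ` words_over (M_gens n)"
      then obtain w where w: "w \<in> words_over (M_gens n)" "x = eval_word (M n) (M_gen_elem n) w" by auto
      have "fst (ev2 w) permutes {1..n}" "snd (ev2 w) permutes {1..n}" using ev2_permutes[OF W[OF w(1)]] by auto
      then show "x \<in> carrier (M n)"
        by (simp add: w(2) eval_ev2[OF W[OF w(1)]] M_carrier permutes_compose permutes_inv)
    qed
  next
    show "carrier (M n) \<subseteq> eval_word (M n) (M_gen_elem n) ` words_over (M_gens n)"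
    proof
      fix x assume "x \<in> carrier (M n)"
      then obtain a h where x: "x = (a, h)" "a permutes {1..n}" "h permutes {1..n}" by (auto simp: M_carrier)
      obtain w where w: "set w \<subseteq> M_gens n \<times> UNIV" "w \<in> words_over (M_gens n)" "ev2 w = (a \<circ> h, h)"
        using surj[of "a \<circ> h" h] x by (auto intro: permutes_compose)
      have "eval_word (M n) (M_gen_elem n) w = x"
        using x by (simp add: eval_ev2[OF w(1)] w(3) fun_eq_iff permutes_inverses)
      then show "x \<in> eval_word (M n) (M_gen_elem n) ` words_over (M_gens n)" using w(2) by force
    qed
  qed
  have rels: "M_rels n \<subseteq> words_over (M_gens n) \<times> words_over (M_gens n)"
    unfolding M_rels_def by (auto simp: words_over_def M_gens_def s_def t_def)
  define NFW where "NFW = (\<lambda>(a, c). map s a @ map t c) ` (NF n \<times> NF n)"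
  have finNFW: "finite NFW" unfolding NFW_def by (simp add: NF_finite)
  have cardNFW: "card NFW \<le> fact n * fact n"
  proof -
    have "card NFW \<le> card (NF n \<times> NF n)" unfolding NFW_def by (rule card_image_le) (simp add: NF_finite)
    also have "\<dots> = card (NF n) * card (NF n)" by (simp add: card_cartesian_product)
    also have "\<dots> \<le> fact n * fact n" using NF_card[of n] by (simp add: mult_le_mono)
    finally show ?thesis .
  qed
  have toNF: "\<exists>nw\<in>NFW. word_equiv (M_rels n) w nw" if "w \<in> words_over (M_gens n)" for w
    using NF_all[OF that] unfolding NFW_def by force
  have sub: "PS n \<times> PS n \<subseteq> ev2 ` NFW"
  proof
    fix x assume "x \<in> PS n \<times> PS n"
    then obtain p q where x: "x = (p, q)" "p permutes {1..n}" "q permutes {1..n}" by auto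
    obtain w where w: "w \<in> words_over (M_gens n)" "ev2 w = (p, q)" using surj[OF x(2,3)] by blast
    obtain nw where "nw \<in> NFW" "word_equiv (M_rels n) w nw" using toNF[OF w(1)] by blast
    then show "x \<in> ev2 ` NFW" using ev2_equiv w x by force
  qed
  have cardPS: "card (PS n) = fact n" by (rule card_permutations) auto
  have "fact n * fact n \<le> card (ev2 ` NFW)"
    using card_mono[OF finite_imageI[OF finNFW] sub] cardPS by (simp add: card_cartesian_product)
  then have "card (ev2 ` NFW) = card NFW" using cardNFW card_image_le[OF finNFW, of ev2] by linarith
  then have inj: "inj_on ev2 NFW" by (rule eq_card_imp_inj_on[OF finNFW])
  have main: "eval_word (M n) (M_gen_elem n) u = eval_word (M n) (M_gen_elem n) v \<longleftrightarrow> word_equiv (M_rels n) u v"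
    if uv: "u \<in> words_over (M_gens n)" "v \<in> words_over (M_gens n)" for u v
  proof
    assume "word_equiv (M_rels n) u v"
    then show "eval_word (M n) (M_gen_elem n) u = eval_word (M n) (M_gen_elem n) v"
      using evalP[OF uv] ev2_equiv by blast
  next
    assume "eval_word (M n) (M_gen_elem n) u = eval_word (M n) (M_gen_elem n) v"
    then have e: "ev2 u = ev2 v" using evalP[OF uv] by blast
    obtain nu where nu: "nu \<in> NFW" "word_equiv (M_rels n) u nu" using toNF[OF uv(1)] by blast
    obtain nv where nv: "nv \<in> NFW" "word_equiv (M_rels n) v nv" using toNF[OF uv(2)] by blast
    have "ev2 nu = ev2 nv" using e ev2_equiv[OF nu(2)] ev2_equiv[OF nv(2)] by simp
    then have "nu = nv" using inj nu(1) nv(1) by (simp add: inj_on_def)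
    then show "word_equiv (M_rels n) u v" using nu(2) nv(2) by (metis word_equiv.sym word_equiv.trans)
  qed
  show ?thesis
    unfolding is_presentation_def
    using M_group gen_carrier carr rels main by blast
qed

end
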